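(* In the complex single-interference setting of the context, assume additionally $\tau\in(0,\pi/2)$, $c_1\neq0$, and $\delta_1:=\sigma_n^2\tan\tau-|c_1|\cos\tau\cos(\phi_c+\phi_z)\neq0$. Then $\mathrm{MSE}_{\rm RZF}=\mathrm{MSE}_{\rm MMSE\text{-}DR}$ if and only if $\cos(\phi_c+\phi_z)=-1$.
   Context: Complex single-interference model: $y(k)=s_0(k)h_0+s_1(k)h_1+n(k)\in\mathbb{C}^N$ ($N\ge2$), with $\|h_0\|=\|h_1\|=1$, $h_0^{\sf H}h_1=\sin\tau\,e^{i\phi_z}$, $\tau\in[0,\pi/2)$, $\phi_z\in[0,2\pi)$; zero-mean jointly weakly stationary complex signals $s_0,s_1$ with $\sigma_j^2:=E|s_j(k)|^2>0$, $c_1:=E[s_0^*(k)s_1(k)]=|c_1|e^{i\phi_c}$, $\phi_c\in[0,2\pi)$; noise $n(k)\sim\mathcal{CN}(0,\sigma_n^2I)$, $\sigma_n^2>0$, uncorrelated with the signals. $R:=E[y(k)y(k)^{\sf H}]$. The MSE of $w$ is $J_{\rm MSE}(w):=E|w^{\sf H}y(k)-s_0(k)|^2$. RZF beamformer $w_{\rm RZF}(\lambda):=R_\lambda^{-1}h_0/(h_0^{\sf H}R_\lambda^{-1}h_0)$ with $R_\lambda:=R+\lambda h_1h_1^{\sf H}$, $\lambda\ge0$, and $\mathrm{MSE}_{\rm RZF}:=\inf_{\lambda\ge0}J_{\rm MSE}(w_{\rm RZF}(\lambda))$. MMSE-DR beamformer $w_{\rm MMSE\text{-}DR}:=\widetilde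 R^{-1}h_0/(h_0^{\sf H}\widetilde R^{-1}h_0)$ with $\widetilde R:=\sigma_n^2I+\sigma_1^2h_1h_1^{\sf H}$, and $\mathrm{MSE}_{\rm MMSE\text{-}DR}:=J_{\rm MSE}(w_{\rm MMSE\text{-}DR})$. *)

theory Defs
  imports "HOL-Analysis.Analysis"
begin

definition hip :: "complex^'n \<Rightarrow> complex^'n \<Rightarrow> complex" where
  "hip u v = (\<Sum>i\<in>UNIV. cnj (u$i) * v$i)"

definition outer :: "complex^'n \<Rightarrow> complex^'n \<Rightarrow> complex^'n^'n" where
  "outer u v = (\<chi> i j. u$i * cnj (v$j))"

text \<open>Covariance R = E[y y^H] of y = s0 h0 + s1 h1 + n, written through the second-order
  moments sig0 = E|s0|^2, sig1 = E|s1|^2, c1 = E[s0^* s1], noise covariance sn * I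
  (note E[s0 s1^*] = cnj c1).\<close>
definition Rcov :: "real \<Rightarrow> real \<Rightarrow> complex \<Rightarrow> real \<Rightarrow> complex^'n \<Rightarrow> complex^'n \<Rightarrow> complex^'n^'n" where
  "Rcov sig0 sig1 c1 sn h0 h1 =
     (\<chi> i j. complex_of_real sn * (if i = j then 1 else 0)
            + complex_of_real sig0 * outer h0 h0 $ i $ j
            + cnj c1 * outer h0 h1 $ i $ j
            + c1 * outer h1 h0 $ i $ j
            + complex_of_real sig1 * outer h1 h1 $ i $ j)"

text \<open>J_MSE(w) = E|w^H y - s0|^2 = w^H R w - w^H p - p^H w + sig0, with
  p = E[y s0^*] = sig0 h0 + c1 h1.\<close>
definition Jmse :: "real \<Rightarrow> real \<Rightarrow> complex \<Rightarrow> real \<Rightarrow> complex^'n \<Rightarrow> complex^'n \<Rightarrow> complex^'n \<Rightarrow> real" where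
  "Jmse sig0 sig1 c1 sn h0 h1 w =
     (let p = complex_of_real sig0 *s h0 + c1 *s h1 in
      Re (hip w (Rcov sig0 sig1 c1 sn h0 h1 *v w) - hip w p - hip p w + complex_of_real sig0))"

definition bf :: "complex^'n^'n \<Rightarrow> complex^'n \<Rightarrow> complex^'n" where
  "bf A h0 = (1 / hip h0 (matrix_inv A *v h0)) *s (matrix_inv A *v h0)"

definition wRZF :: "real \<Rightarrow> real \<Rightarrow> complex \<Rightarrow> real \<Rightarrow> complex^'n \<Rightarrow> complex^'n \<Rightarrow> real \<Rightarrow> complex^'n" where
  "wRZF sig0 sig1 c1 sn h0 h1 lam =
     bf (Rcov sig0 sig1 c1 sn h0 h1 + (\<chi> i j. complex_of_real lam * outer h1 h1 $ i $ j)) h0"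

definition MSE_RZF :: "real \<Rightarrow> real \<Rightarrow> complex \<Rightarrow> real \<Rightarrow> complex^'n \<Rightarrow> complex^'n \<Rightarrow> real" where
  "MSE_RZF sig0 sig1 c1 sn h0 h1 =
     (INF lam\<in>{0::real..}. Jmse sig0 sig1 c1 sn h0 h1 (wRZF sig0 sig1 c1 sn h0 h1 lam))"

definition wMMSEDR :: "real \<Rightarrow> real \<Rightarrow> complex^'n \<Rightarrow> complex^'n \<Rightarrow> complex^'n" where
  "wMMSEDR sig1 sn h0 h1 =
     bf (\<chi> i j. complex_of_real sn * (if i = j then 1 else 0)
              + complex_of_real sig1 * outer h1 h1 $ i $ j) h0"

definition MSE_MMSEDR :: "real \<Rightarrow> real \<Rightarrow> complex \<Rightarrow> real \<Rightarrow> complex^'n \<Rightarrow> complex^'n \<Rightarrow> real" where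
  "MSE_MMSEDR sig0 sig1 c1 sn h0 h1 = Jmse sig0 sig1 c1 sn h0 h1 (wMMSEDR sig1 sn h0 h1)"

end

theory Submission
  imports Defs
begin


lemma hip_add_r: "hip u (v + w) = hip u v + hip u w"
  by (simp add: hip_def distrib_left sum.distrib)
lemma hip_add_l: "hip (u + v) w = hip u w + hip v w"
  by (simp add: hip_def distrib_right sum.distrib)
lemma hip_diff_r: "hip u (v - w) = hip u v - hip u w"
  by (simp add: hip_def right_diff_distrib sum_subtractf)
lemma hip_scale_r: "hip u (k *s v) = k * hip u v"
  by (simp add: hip_def sum_distrib_left mult.left_commute)
lemma hip_scale_l: "hip (k *s u) v = cnj k * hip u v"
  by (simp add: hip_def sum_distrib_left mult.assoc)
lemma hip_cnj: "hip u v = cnj (hip v u)"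
  by (simp add: hip_def mult.commute)
lemma hip_self: "hip u u = complex_of_real ((norm u)^2)"
proof -
  have "hip u u = (\<Sum>i\<in>UNIV. complex_of_real ((cmod (u$i))^2))"
    unfolding hip_def by (rule sum.cong) (auto simp: complex_norm_square[symmetric] mult.commute simp del: of_real_power)
  also have "\<dots> = complex_of_real (\<Sum>i\<in>UNIV. (cmod (u$i))^2)" by simp
  also have "(\<Sum>i\<in>UNIV. (cmod (u$i))^2) = (norm u)^2"
    unfolding norm_vec_def L2_set_def by (simp add: sum_nonneg)
  finally show ?thesis .
qed

lemma sum_delta_aux: "(\<Sum>j\<in>UNIV. k * ((x::complex^'n) $ j * (if i = j then 1 else 0))) = k * x$i"
proof -
  have "(\<Sum>j\<in>UNIV. k * (x $ j * (if i = j then 1 else 0))) = (\<Sum>j\<in>UNIV. if i = j then k * x$j else 0)"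
    by (rule sum.cong) auto
  then show ?thesis by simp
qed

lemma Rcov_mv:
  "Rcov a b c sn h0 h1 *v x = complex_of_real sn *s x
     + (complex_of_real a * hip h0 x + cnj c * hip h1 x) *s h0
     + (c * hip h0 x + complex_of_real b * hip h1 x) *s h1"
proof -
  show ?thesis
  unfolding Rcov_def matrix_vector_mult_def hip_def outer_def
  by (simp add: vec_eq_iff algebra_simps sum.distrib sum_distrib_left sum_delta_aux)
qed


lemma Re_mult_cnj: "Re (z * cnj z) = (cmod z)^2"
  by (simp add: cmod_def power2_eq_square)

lemma ab_ineq:
  fixes a b k p q :: real
  assumes "a \<ge> 0" "b \<ge> 0" "k \<ge> 0" "k^2 \<le> a*b" "p \<ge> 0" "q \<ge> 0"
  shows "2*k*p*q \<le> a*p^2 + b*q^2"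
proof (cases "a = 0")
  case True
  then have "k^2 \<le> 0" using assms by simp
  then have "k = 0" by simp
  then show ?thesis using True assms by simp
next
  case False
  then have a: "a > 0" using assms by simp
  have "a*(a*p^2 + b*q^2 - 2*k*p*q) = (a*p - k*q)^2 + (a*b - k^2)*q^2"
    by (simp add: algebra_simps power2_eq_square)
  also have "\<dots> \<ge> 0" using assms by simp
  finally have "a*(a*p^2 + b*q^2 - 2*k*p*q) \<ge> 0" .
  then show ?thesis using a by (simp add: zero_le_mult_iff)
qed

lemma Rcov_quad:
  assumes "a \<ge> 0" "b \<ge> 0" "(cmod c)^2 \<le> a*b"
  shows "Re (hip x (Rcov a b c sn h0 h1 *v x)) \<ge> sn * (norm x)^2"
proof -
  define P where "P = hip h0 x"
  define Q where "Q = hip h1 x"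
  have e: "hip x (Rcov a b c sn h0 h1 *v x) = complex_of_real sn * hip x x
     + (complex_of_real a * P + cnj c * Q) * cnj P + (c * P + complex_of_real b * Q) * cnj Q"
    unfolding Rcov_mv P_def Q_def by (simp add: hip_add_r hip_scale_r hip_cnj[of x h0] hip_cnj[of x h1] algebra_simps)
  have r: "Re (hip x (Rcov a b c sn h0 h1 *v x)) = sn * (norm x)^2 + a * (cmod P)^2 + b * (cmod Q)^2
     + 2 * Re (c * P * cnj Q)"
    unfolding e by (simp add: hip_self Re_mult_cnj distrib_left distrib_right mult.assoc power2_eq_square[symmetric] cmod_def) (simp add: algebra_simps)
  have "Re (c * P * cnj Q) \<ge> - (cmod c * cmod P * cmod Q)"
    using abs_Re_le_cmod[of "c * P * cnj Q"] by (simp add: norm_mult)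
  moreover have "2 * cmod c * cmod P * cmod Q \<le> a * (cmod P)^2 + b * (cmod Q)^2"
    by (rule ab_ineq) (use assms in auto)
  ultimately show ?thesis unfolding r by linarith
qed


lemma mv_scale: "(A::complex^'n^'n) *v (k *s x) = k *s (A *v x)"
  by (simp add: vec_eq_iff matrix_vector_mult_def sum_distrib_left algebra_simps)

lemma norm_zero_hip: "hip x x = 0 \<Longrightarrow> x = 0"
  by (simp add: hip_self)

lemma bf_Rcov:
  fixes h0 h1 :: "complex^'n"
  assumes sn: "sn > 0" and ab: "a \<ge> 0" "b \<ge> 0" "(cmod c)^2 \<le> a*b"
    and h0: "norm h0 = 1" and h1: "norm h1 = 1"
    and rho: "cmod (hip h0 h1) < 1"
  defines "w \<equiv> bf (Rcov a b c sn h0 h1) h0"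
  defines "C \<equiv> 1 - (cmod (hip h0 h1))^2"
  shows "hip h0 w = 1"
    and "hip h1 w * complex_of_real (sn + b*C) = complex_of_real sn * cnj (hip h0 h1) - c * complex_of_real C"
    and "C * (sn * Re (hip w w)) = sn*C + sn * (cmod (cnj (hip h0 h1) - hip h1 w))^2"
proof -
  define R where "R = Rcov a b c sn h0 h1"
  define \<rho> where "\<rho> = hip h0 h1"
  have quad: "\<And>x. Re (hip x (R *v x)) \<ge> sn * (norm x)^2"
    unfolding R_def using Rcov_quad ab by blast
  have ker: "\<forall>x. R *v x = 0 \<longrightarrow> x = 0"
  proof (intro allI impI)
    fix x assume "R *v x = 0"
    then have "sn * (norm x)^2 \<le> 0" using quad[of x] by (simp add: hip_def)
    then show "x = 0" using sn by (simp add: mult_le_0_iff)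
  qed
  have inv: "invertible R"
    using ker matrix_left_invertible_ker invertible_left_inverse by blast
  have "R ** matrix_inv R = mat 1 \<and> matrix_inv R ** R = mat 1"
    unfolding matrix_inv_def by (rule someI_ex) (use inv in \<open>simp add: invertible_def\<close>)
  then have RI: "R ** matrix_inv R = mat 1" by blast
  define x where "x = matrix_inv R *v h0"
  have Rx: "R *v x = h0"
    unfolding x_def by (simp add: matrix_vector_mul_assoc RI)
  define P where "P = hip h0 x"
  have h0nz: "h0 \<noteq> 0" using h0 by auto
  have "P \<noteq> 0"
  proof
    assume "P = 0"
    then have "hip x (R *v x) = 0" using Rx P_def hip_cnj[of x h0] by simp
    then have "sn * (norm x)^2 \<le> 0" using quad[of x] by simp
    then have "x = 0" using sn by (simp add: mult_le_0_iff)
    then show False using Rx h0nz by simp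
  qed
  have w: "w = (1/P) *s x" unfolding w_def bf_def R_def[symmetric] x_def[symmetric] P_def by simp
  show w0: "hip h0 w = 1" using \<open>P \<noteq> 0\<close> unfolding w hip_scale_r P_def[symmetric] by simp
  define B where "B = hip h1 w"
  have Rw: "R *v w = (1/P) *s h0" unfolding w mv_scale Rx ..
  define K where "K = 1/P - complex_of_real a - cnj c * B"
  define L where "L = c + complex_of_real b * B"
  have "complex_of_real sn *s w + (complex_of_real a + cnj c * B) *s h0 + L *s h1 = (1/P) *s h0"
    using Rw unfolding R_def Rcov_mv w0 B_def[symmetric] L_def by simp
  then have sw: "complex_of_real sn *s w = K *s h0 - L *s h1"
    unfolding K_def by (simp add: algebra_simps vector_sadd_rdistrib vector_ssub_ldistrib) 
  have hh0: "hip h0 h0 = 1" using h0 by (simp add: hip_self)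
  have e0: "complex_of_real sn = K - L * \<rho>"
    using arg_cong[OF sw, of "hip h0"] unfolding hip_diff_r hip_scale_r w0 hh0 \<rho>_def by simp
  have e1: "complex_of_real sn * B = K * cnj \<rho> - L"
    using arg_cong[OF sw, of "hip h1"] unfolding hip_diff_r hip_scale_r B_def[symmetric] \<rho>_def
    by (simp add: hip_cnj[of h1 h0] h1 hip_self)
  have e2: "complex_of_real sn * hip w w = K - L * cnj B"
    using arg_cong[OF sw, of "hip w"] unfolding hip_diff_r hip_scale_r
    by (simp add: hip_cnj[of w h0] hip_cnj[of w h1] w0 B_def)
  have rr: "\<rho> * cnj \<rho> = 1 - complex_of_real C"
    unfolding C_def \<rho>_def by (simp add: complex_norm_square[symmetric] del: of_real_power)
  have K: "K = complex_of_real sn + L * \<rho>" using e0 by simp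
  have "complex_of_real sn * B = complex_of_real sn * cnj \<rho> + L * (\<rho> * cnj \<rho>) - L"
    using e1 unfolding K by (simp add: algebra_simps)
  then have LC: "L * complex_of_real C = complex_of_real sn * (cnj \<rho> - B)"
    unfolding rr by (simp add: algebra_simps)
  show "hip h1 w * complex_of_real (sn + b*C) = complex_of_real sn * cnj (hip h0 h1) - c * complex_of_real C"
    using LC unfolding B_def[symmetric] \<rho>_def[symmetric] L_def by (simp add: algebra_simps)
  define z where "z = cnj \<rho> - B"
  have "complex_of_real C * (complex_of_real sn * hip w w) = complex_of_real C * complex_of_real sn + (L * complex_of_real C) * (\<rho> - cnj B)"
    unfolding e2 K by (simp add: algebra_simps)
  also have "\<dots> = complex_of_real (C * sn) + complex_of_real sn * (z * cnj z)"
    unfolding LC z_def by simp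
  finally have X: "complex_of_real C * (complex_of_real sn * hip w w) = complex_of_real (C * sn) + complex_of_real sn * (z * cnj z)" .
  have "Re (complex_of_real sn * (z * cnj z)) = sn * (cmod z)^2"
    using Re_mult_cnj[of z] by simp
  then have "Re (complex_of_real C * (complex_of_real sn * hip w w)) = C * sn + sn * (cmod (cnj \<rho> - B))^2"
    unfolding X z_def by simp
  then show "C * (sn * Re (hip w w)) = sn*C + sn * (cmod (cnj (hip h0 h1) - hip h1 w))^2"
    unfolding B_def \<rho>_def by (simp add: algebra_simps)
qed


lemma Jmse_dist:
  assumes w0: "hip h0 w = 1"
  shows "Jmse sig0 sig1 c1 sn h0 h1 w = sn * Re (hip w w) + sig1 * (cmod (hip h1 w))^2"
proof -
  define B where "B = hip h1 w"
  have a: "hip w h0 = 1" using w0 hip_cnj[of w h0] by simp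
  have b: "hip w h1 = cnj B" using hip_cnj[of w h1] B_def by simp
  have c: "hip h1 w = B" using B_def by simp
  have "hip w (Rcov sig0 sig1 c1 sn h0 h1 *v w) - hip w (complex_of_real sig0 *s h0 + c1 *s h1)
        - hip (complex_of_real sig0 *s h0 + c1 *s h1) w + complex_of_real sig0
        = complex_of_real sn * hip w w + complex_of_real sig1 * (B * cnj B)"
    unfolding Rcov_mv by (simp add: hip_add_r hip_add_l hip_scale_r hip_scale_l a b c w0 algebra_simps)
  then show ?thesis unfolding Jmse_def Let_def B_def[symmetric]
    by (simp add: cmod_def power2_eq_square)
qed


lemma coord_id:
  fixes sn C sig1 r s x :: real
  assumes "C > 0" "s * (sn + sig1*C) = sn*r"
  shows "sn*(r-x)^2/C + sig1*x^2 - (sn*(r-s)^2/C + sig1* s^2) = (sn/C+sig1)*(x-s)^2"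
proof -
  have "sn*(r-x)^2/C + sig1*x^2 - (sn*(r-s)^2/C + sig1* s^2) - (sn/C+sig1)*(x-s)^2
      = 2*(x-s)*(s*(sn + sig1*C) - sn*r)/C"
    using assms(1) by (simp add: field_simps power2_eq_square)
  then show ?thesis using assms by simp
qed

lemma Gdiff:
  fixes sn C sig1 :: real and r B Bs :: complex
  assumes "C > 0" "Bs * complex_of_real (sn + sig1*C) = complex_of_real sn * r"
  shows "sn*(cmod (r - B))^2/C + sig1*(cmod B)^2 - (sn*(cmod (r - Bs))^2/C + sig1*(cmod Bs)^2)
         = (sn/C+sig1)*(cmod (B - Bs))^2"
proof -
  have re: "Re Bs * (sn + sig1*C) = sn * Re r" using arg_cong[OF assms(2), of Re] by simp
  have im: "Im Bs * (sn + sig1*C) = sn * Im r" using arg_cong[OF assms(2), of Im] by simp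
  note c1 = coord_id[OF assms(1) re, of "Re B"]
  note c2 = coord_id[OF assms(1) im, of "Im B"]
  show ?thesis unfolding cmod_power2 using c1 c2 by (simp add: add_divide_distrib distrib_left)
qed

lemma eps_bound:
  fixes s m D Dl k sg :: real
  assumes "s > 0" "m > 0" "D > 0" "Dl \<ge> D" "k^2 + sg^2 = 1" "k > -1"
  shows "((s - m*k)/Dl - s/D)^2 + (m* sg/Dl)^2 \<ge> (1+k)/4 * (min s m)^2 / D^2"
proof -
  define t where "t = D/Dl"
  have Dl: "Dl > 0" using assms by simp
  have t0: "t > 0" and t1: "t \<le> 1" using assms Dl unfolding t_def by (auto simp: field_simps)
  define x where "x = (1-t)* s"
  define y where "y = t*m"
  have x0: "x \<ge> 0" and y0: "y \<ge> 0" using t0 t1 assms unfolding x_def y_def by auto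
  have "k^2 \<le> 1" using assms(5) by (smt (verit) zero_le_power2)
  then have k1: "k \<le> 1" by (simp add: abs_square_le_1)
  have "(((s - m*k)/Dl - s/D)^2 + (m* sg/Dl)^2) * D^2 = (t*(s - m*k) - s)^2 + (t*m* sg)^2"
    unfolding t_def using assms Dl by (simp add: field_simps power2_eq_square)
  also have "\<dots> = (x + k*y)^2 + y^2* sg^2"
    unfolding x_def y_def by (simp add: algebra_simps power2_eq_square)
  also have "\<dots> = x^2 + 2*k*x*y + y^2*(k^2+sg^2)"
    by (simp add: algebra_simps power2_eq_square)
  also have "\<dots> = x^2 + 2*k*x*y + y^2"
    using assms(5) by simp
  also have "\<dots> \<ge> (1+k)/2*(x^2+y^2)"
  proof -
  have idq: "x^2 + 2*k*x*y + y^2 - (1+k)/2*(x^2+y^2) = (1-k)/2*(x^2+y^2) + 2*k*x*y"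
    by (simp add: field_simps)
  show ?thesis
  proof (cases "k \<ge> 0")
    case True
    have "0 \<le> (1-k)/2*(x^2+y^2) + 2*k*x*y" using True k1 x0 y0 by simp
    then show ?thesis using idq by linarith
  next
    case False
    have "0 \<le> (x-y)^2" by simp
    then have "2*x*y \<le> x^2+y^2" by (simp add: power2_diff)
    then have "(1-k)*(2*x*y) \<le> (1-k)*(x^2+y^2)" using k1 by (intro mult_left_mono) auto
    then have "(1-k)/2*(x^2+y^2) \<ge> (1-k)*(x*y)" by simp
    moreover have "(1+k)*(x*y) \<ge> 0" using assms x0 y0 by simp
    ultimately have "0 \<le> (1-k)/2*(x^2+y^2) + 2*k*x*y" by (simp add: algebra_simps)
    then show ?thesis using idq by linarith
  qed
  qed
  finally have A: "(1+k)/2*(x^2+y^2) \<le> (((s - m*k)/Dl - s/D)^2 + (m* sg/Dl)^2) * D^2" .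
  have "x + y \<ge> min s m"
  proof -
    have "x + y = (1-t)* s + t*m" unfolding x_def y_def by simp
    also have "\<dots> \<ge> (1-t)*min s m + t*min s m"
      using t0 t1 by (intro add_mono mult_left_mono) auto
    finally show ?thesis by (simp add: algebra_simps)
  qed
  then have "(min s m)^2 \<le> (x+y)^2" using assms by (intro power_mono) auto
  also have "(x+y)^2 \<le> 2*(x^2+y^2)"
  proof -
    have "0 \<le> (x-y)^2" by simp
    then show ?thesis by (simp add: power2_diff power2_sum)
  qed
  finally have "(1+k)*(min s m)^2 \<le> (1+k)*(2*(x^2+y^2))" using assms by (intro mult_left_mono) auto
  moreover have "(1+k)/4*(min s m)^2 = ((1+k)*(min s m)^2)/4" by simp
  moreover have "(1+k)/2*(x^2+y^2) = ((1+k)*(2*(x^2+y^2)))/4" by simp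
  ultimately have "(1+k)/4*(min s m)^2 \<le> (1+k)/2*(x^2+y^2)" by linarith
  with A have "(1+k)/4*(min s m)^2 \<le> (((s - m*k)/Dl - s/D)^2 + (m* sg/Dl)^2) * D^2" by linarith
  then show ?thesis using assms by (simp add: pos_divide_le_eq)
qed



theorem mainTheorem12:
  fixes h0 h1 :: "complex^'n"
    and sig0 sig1 sn \<tau> \<phi>z \<phi>c :: real
    and c1 :: complex
  assumes N2: "CARD('n) \<ge> 2"
    and h0: "norm h0 = 1" and h1: "norm h1 = 1"
    and tau: "0 < \<tau>" "\<tau> < pi / 2"
    and phiz: "0 \<le> \<phi>z" "\<phi>z < 2 * pi"
    and corr: "hip h0 h1 = complex_of_real (sin \<tau>) * cis \<phi>z"
    and sig0: "sig0 > 0" and sig1: "sig1 > 0" and sn: "sn > 0"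
    and CS: "(cmod c1)\<^sup>2 \<le> sig0 * sig1"
    and c1nz: "c1 \<noteq> 0"
    and phic: "0 \<le> \<phi>c" "\<phi>c < 2 * pi"
    and c1pol: "c1 = complex_of_real (cmod c1) * cis \<phi>c"
    and delta: "sn * tan \<tau> - cmod c1 * cos \<tau> * cos (\<phi>c + \<phi>z) \<noteq> 0"
  shows "MSE_RZF sig0 sig1 c1 sn h0 h1 = MSE_MMSEDR sig0 sig1 c1 sn h0 h1
         \<longleftrightarrow> cos (\<phi>c + \<phi>z) = -1"
proof -
  define \<rho> where "\<rho> = hip h0 h1"
  have sinp: "sin \<tau> > 0" using tau by (intro sin_gt_zero) auto
  have cosp: "cos \<tau> > 0" using tau by (intro cos_gt_zero) auto
  have cmr: "cmod \<rho> = sin \<tau>" using corr sinp by (simp add: \<rho>_def norm_mult)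
  define C where "C = 1 - (cmod (hip h0 h1))^2"
  have CC: "C = (cos \<tau>)^2" unfolding C_def \<rho>_def[symmetric] cmr by (simp add: cos_squared_eq)
  have Cp: "C > 0" unfolding CC using cosp by simp
  have rho1: "cmod (hip h0 h1) < 1"
  proof -
    have "(sin \<tau>)^2 < 1" using cosp sin_squared_eq[of \<tau>] by (smt (verit) zero_less_power)
    then have "\<bar>sin \<tau>\<bar> < 1" by (simp only: abs_square_less_1)
    then show ?thesis using cmr \<rho>_def by simp
  qed
  define G where "G B = sn + sn*(cmod(cnj \<rho> - B))^2/C + sig1*(cmod B)^2" for B
  define K where "K = sn/C + sig1"
  have Kp: "K > 0" unfolding K_def using sn sig1 Cp by (intro add_pos_pos divide_pos_pos)
  have mDR: "(\<chi> i j. complex_of_real sn * (if i = j then 1 else 0) + complex_of_real sig1 * outer h1 h1 $ i $ j)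
     = Rcov 0 sig1 0 sn h0 h1" unfolding Rcov_def by (simp add: vec_eq_iff)
  define wd where "wd = wMMSEDR sig1 sn h0 h1"
  have wd: "wd = bf (Rcov 0 sig1 0 sn h0 h1) h0" unfolding wd_def wMMSEDR_def mDR ..
  define Bs where "Bs = hip h1 wd"
  note bfd = bf_Rcov[of sn 0 sig1 0 h0 h1, OF sn _ _ _ h0 h1 rho1, folded wd C_def Bs_def]
  have Bs: "Bs * complex_of_real (sn + sig1*C) = complex_of_real sn * cnj \<rho>"
    using bfd(2) sig1 unfolding \<rho>_def by simp
  have JDR: "MSE_MMSEDR sig0 sig1 c1 sn h0 h1 = G Bs"
  proof -
    have "MSE_MMSEDR sig0 sig1 c1 sn h0 h1 = sn * Re (hip wd wd) + sig1 * (cmod Bs)^2"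
      unfolding MSE_MMSEDR_def wd_def[symmetric] Bs_def using bfd(1) sig1 by (simp add: Jmse_dist)
    moreover have "C * (sn * Re (hip wd wd)) = sn*C + sn * (cmod (cnj \<rho> - Bs))^2"
      using bfd(3) sig1 unfolding \<rho>_def by simp
    ultimately show ?thesis unfolding G_def using Cp by (simp add: field_simps)
  qed
  define g where "g lam = Jmse sig0 sig1 c1 sn h0 h1 (wRZF sig0 sig1 c1 sn h0 h1 lam)" for lam
  define Bf where "Bf lam = hip h1 (wRZF sig0 sig1 c1 sn h0 h1 lam)" for lam
  have gB: "g lam = G (Bf lam) \<and> Bf lam * complex_of_real (sn + (sig1+lam)*C) = complex_of_real sn * cnj \<rho> - c1 * complex_of_real C"
    if lam: "lam \<ge> 0" for lam
  proof -
    have m: "Rcov sig0 sig1 c1 sn h0 h1 + (\<chi> i j. complex_of_real lam * outer h1 h1 $ i $ j) = Rcov sig0 (sig1+lam) c1 sn h0 h1"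
      unfolding Rcov_def by (simp add: vec_eq_iff algebra_simps)
    have w: "wRZF sig0 sig1 c1 sn h0 h1 lam = bf (Rcov sig0 (sig1+lam) c1 sn h0 h1) h0"
      unfolding wRZF_def m ..
    have cs: "(cmod c1)^2 \<le> sig0 * (sig1+lam)" using CS sig0 lam by (smt (verit) mult_left_mono)
    note bfr = bf_Rcov[of sn sig0 "sig1+lam" c1 h0 h1, OF sn _ _ cs h0 h1 rho1, folded w C_def Bf_def]
    have "g lam = sn * Re (hip (wRZF sig0 sig1 c1 sn h0 h1 lam) (wRZF sig0 sig1 c1 sn h0 h1 lam)) + sig1 * (cmod (Bf lam))^2"
      unfolding g_def Bf_def using bfr(1) sig0 sig1 lam by (simp add: Jmse_dist)
    moreover have "C * (sn * Re (hip (wRZF sig0 sig1 c1 sn h0 h1 lam) (wRZF sig0 sig1 c1 sn h0 h1 lam))) = sn*C + sn * (cmod (cnj \<rho> - Bf lam))^2"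
      using bfr(3) sig0 sig1 lam unfolding \<rho>_def by simp
    ultimately have "g lam = G (Bf lam)" unfolding G_def using Cp by (simp add: field_simps)
    moreover have "Bf lam * complex_of_real (sn + (sig1+lam)*C) = complex_of_real sn * cnj \<rho> - c1 * complex_of_real C"
      using bfr(2) sig0 sig1 lam unfolding \<rho>_def by simp
    ultimately show ?thesis by blast
  qed
  have Gd: "G B - G Bs = K * (cmod (B - Bs))^2" for B
    using Gdiff[OF Cp Bs, of B] unfolding G_def K_def by simp
  have low: "g lam \<ge> G Bs" if "lam \<ge> 0" for lam
    using gB[OF that] Gd[of "Bf lam"] Kp by (smt (verit) mult_nonneg_nonneg zero_le_power2)
  have RZF: "MSE_RZF sig0 sig1 c1 sn h0 h1 = Inf (g ` {0..})"
    unfolding MSE_RZF_def g_def ..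
  define e where "e = cnj (cis \<phi>z)"
  define \<theta> where "\<theta> = \<phi>c + \<phi>z"
  have ce: "cis \<phi>z * e = 1" unfolding e_def cis_cnj cis_mult by simp
  have rhoe: "cnj \<rho> = complex_of_real (sin \<tau>) * e" unfolding \<rho>_def corr e_def by simp
  define ac where "ac = cmod c1"
  have c1z: "c1 * cis \<phi>z = complex_of_real (ac) * cis \<theta>"
    unfolding ac_def by (subst c1pol) (simp add: \<theta>_def mult.assoc cis_mult)
  have c1p: "ac > 0" using c1nz unfolding ac_def by simp
  define D where "D = sn + sig1*C"
  have Dp: "D > 0" unfolding D_def using sn sig1 Cp by (simp add: add_pos_pos)
  have Dlp: "sn + (sig1+lam)*C > 0" if "lam \<ge> 0" for lam
    using sn sig1 Cp that by (simp add: add_pos_nonneg add_pos_pos)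
  show ?thesis
  proof
    assume cth: "cos (\<phi>c + \<phi>z) = -1"
    have sth: "sin \<theta> = 0" using cth sin_squared_eq[of \<theta>] unfolding \<theta>_def by simp
    have cisth: "cis \<theta> = -1" using cth sth unfolding \<theta>_def by (simp add: complex_eq_iff)
    have c1e: "c1 = - complex_of_real (ac) * e"
    proof -
      have "c1 = c1 * (cis \<phi>z * e)" using ce by simp
      also have "\<dots> = (c1 * cis \<phi>z) * e" by (simp add: mult.assoc)
      finally show ?thesis unfolding c1z cisth by simp
    qed
    define lam0 where "lam0 = ac * D / (sn * sin \<tau>)"
    have l0: "lam0 \<ge> 0" unfolding lam0_def using c1p Dp sn sinp by simp
    define Dl where "Dl = sn + (sig1+lam0)*C"
    have Dlr: "Dl = D * (sn * sin \<tau> + ac * C) / (sn * sin \<tau>)"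
      unfolding Dl_def lam0_def D_def using sn sinp by (simp add: field_simps)
    have "Bf lam0 * complex_of_real Dl = complex_of_real (sn * sin \<tau> + ac * C) * e"
      using gB[OF l0] unfolding Dl_def[symmetric] rhoe c1e by (simp add: algebra_simps)
    moreover have "Bs * complex_of_real Dl = complex_of_real (sn * sin \<tau> + ac * C) * e"
    proof -
      have "Bs * complex_of_real Dl = (Bs * complex_of_real D) * complex_of_real ((sn * sin \<tau> + ac * C) / (sn * sin \<tau>))"
        unfolding Dlr by (simp add: mult.assoc)
      also have "\<dots> = complex_of_real (sn * sin \<tau> * ((sn * sin \<tau> + ac * C) / (sn * sin \<tau>))) * e"
        using Bs unfolding D_def[symmetric] rhoe by (simp add: mult_ac)
      also have "sn * sin \<tau> * ((sn * sin \<tau> + ac * C) / (sn * sin \<tau>)) = sn * sin \<tau> + ac * C"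
        using sn sinp by simp
      finally show ?thesis .
    qed
    ultimately have "Bf lam0 * complex_of_real Dl = Bs * complex_of_real Dl" by simp
    moreover have "Dl > 0" unfolding Dl_def using Dlp[OF l0] .
    ultimately have BB: "Bf lam0 = Bs" by simp
    have "g lam0 = G Bs" using gB[OF l0] BB by simp
    then have "Inf (g ` {0..}) = G Bs"
      using low l0 by (intro cInf_eq_minimum) (auto intro: image_eqI[of _ _ lam0])
    then show "MSE_RZF sig0 sig1 c1 sn h0 h1 = MSE_MMSEDR sig0 sig1 c1 sn h0 h1"
      unfolding RZF JDR .
  next
    assume eq: "MSE_RZF sig0 sig1 c1 sn h0 h1 = MSE_MMSEDR sig0 sig1 c1 sn h0 h1"
    show "cos (\<phi>c + \<phi>z) = -1"
    proof (rule ccontr)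
      assume ne: "cos (\<phi>c + \<phi>z) \<noteq> -1"
      have kg: "cos \<theta> > -1" using ne cos_ge_minus_one[of \<theta>] unfolding \<theta>_def by linarith
      define sv where "sv = sn * sin \<tau>"
      define mv where "mv = ac * C"
      have svp: "sv > 0" unfolding sv_def using sn sinp by simp
      have mvp: "mv > 0" unfolding mv_def using c1p Cp by simp
      define \<epsilon> where "\<epsilon> = (1 + cos \<theta>)/4 * (min sv mv)^2 / D^2"
      have ep: "\<epsilon> > 0" unfolding \<epsilon>_def using kg svp mvp Dp by simp
      have bnd: "G Bs + K * \<epsilon> \<le> g lam" if lam: "lam \<ge> 0" for lam
      proof -
        define Dl where "Dl = sn + (sig1+lam)*C"
        have Dlp': "Dl > 0" unfolding Dl_def using Dlp[OF lam] .
        have DDl: "D \<le> Dl" unfolding Dl_def D_def using lam Cp by (simp add: algebra_simps)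
        have "Bf lam * cis \<phi>z * complex_of_real Dl = (Bf lam * complex_of_real Dl) * cis \<phi>z"
          by (simp add: mult_ac)
        also have "\<dots> = (complex_of_real sn * (complex_of_real (sin \<tau>) * e) - c1 * complex_of_real C) * cis \<phi>z"
          using gB[OF lam] unfolding Dl_def[symmetric] rhoe by simp
        also have "\<dots> = complex_of_real sn * complex_of_real (sin \<tau>) * (cis \<phi>z * e) - (c1 * cis \<phi>z) * complex_of_real C"
          by (simp add: algebra_simps)
        also have "\<dots> = complex_of_real sv - complex_of_real mv * cis \<theta>"
          unfolding ce c1z sv_def mv_def by simp
        finally have bf1: "Bf lam * cis \<phi>z = (complex_of_real sv - complex_of_real mv * cis \<theta>) / complex_of_real Dl"
          using Dlp' by (simp add: field_simps)
        have "Bs * cis \<phi>z * complex_of_real D = (Bs * complex_of_real D) * cis \<phi>z" by (simp add: mult_ac)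
        also have "\<dots> = complex_of_real sv"
          using Bs unfolding D_def[symmetric] rhoe sv_def by (simp add: mult_ac ce[unfolded mult.commute[of "cis \<phi>z"]])
        finally have bs1: "Bs * cis \<phi>z = complex_of_real (sv / D)" using Dp by (simp add: field_simps)
        define u where "u = (Bf lam - Bs) * cis \<phi>z"
        have cu: "cmod u = cmod (Bf lam - Bs)" unfolding u_def by (simp add: norm_mult)
        have ud: "u = (complex_of_real sv - complex_of_real mv * cis \<theta>) / complex_of_real Dl - complex_of_real (sv / D)"
          unfolding u_def left_diff_distrib bf1 bs1 ..
        have reu: "Re u = (sv - mv * cos \<theta>)/Dl - sv/D" unfolding ud by (simp add: diff_divide_distrib)
        have imu: "Im u = - (mv * sin \<theta> / Dl)" unfolding ud by simp
        have "(cmod u)^2 = ((sv - mv * cos \<theta>)/Dl - sv/D)^2 + (mv * sin \<theta> / Dl)^2"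
          unfolding cmod_power2 reu imu by simp
        also have "\<dots> \<ge> \<epsilon>" unfolding \<epsilon>_def
          by (rule eps_bound[OF svp mvp Dp DDl _ kg]) (simp add: sin_cos_squared_add2[of \<theta>] add.commute)
        finally have "(cmod (Bf lam - Bs))^2 \<ge> \<epsilon>" using cu by simp
        then have "K * \<epsilon> \<le> K * (cmod (Bf lam - Bs))^2" using Kp by simp
        then show ?thesis using gB[OF lam] Gd[of "Bf lam"] by simp
      qed
      have "G Bs + K * \<epsilon> \<le> Inf (g ` {0..})"
        by (rule cINF_greatest) (use bnd in auto)
      then have "G Bs + K * \<epsilon> \<le> G Bs" using eq unfolding RZF JDR by simp
      moreover have "K * \<epsilon> > 0" using Kp ep by simp
      ultimately show False by simp
    qed
  qed
qed

end
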